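(* Let $p\ge1$ and $n\ge2$. Then $\Lambda_pB^n=B^n$.
   Context: $B^n$ is the Euclidean unit ball in $\mathbb{R}^n$, $V$ is volume, and $\omega_s=\pi^{s/2}/\Gamma(1+s/2)$ for $s\ge0$. For $x,y\in\mathbb{R}^n$ let $[x,y]=\sqrt{|x|^2|y|^2-(x\cdot y)^2}$. For a star-shaped set $K$ (in particular a star body) with $V(K)>0$ and $\int_K|y|^p\,dy<\infty$, $\Lambda_pK$ is the convex body with support function $$h_{\Lambda_pK}(x)^p=\frac{1}{\widetilde c_{n,p}V(K)}\int_K[x,y]^p\,dy,\qquad \widetilde c_{n,p}=\frac{(n-1)\omega_{n-1}\omega_{n+p-2}}{(n+p)\omega_n\omega_{n+p-3}}.$$ *)

theory Defs
  imports "HOL-Analysis.Analysis"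
begin

definition omega :: "real \<Rightarrow> real" where
  "omega s = pi powr (s / 2) / Gamma (1 + s / 2)"

definition bracket :: "'a::euclidean_space \<Rightarrow> 'a \<Rightarrow> real" where
  "bracket x y = sqrt ((norm x)\<^sup>2 * (norm y)\<^sup>2 - (x \<bullet> y)\<^sup>2)"

definition c_tilde :: "real \<Rightarrow> real \<Rightarrow> real" where
  "c_tilde n p = ((n - 1) * omega (n - 1) * omega (n + p - 2)) /
                 ((n + p) * omega n * omega (n + p - 3))"

definition Lambda_supp :: "real \<Rightarrow> 'a::euclidean_space set \<Rightarrow> 'a \<Rightarrow> real" where
  "Lambda_supp p K x =
     ((1 / (c_tilde (real DIM('a)) p * measure lebesgue K)) *
        integral K (\<lambda>y. bracket x y powr p)) powr (1 / p)"

text \<open>The convex body with the given support function (intersection of its supporting half-spaces).\<close>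
definition Lambda :: "real \<Rightarrow> 'a::euclidean_space set \<Rightarrow> 'a set" where
  "Lambda p K = {z. \<forall>x. z \<bullet> x \<le> Lambda_supp p K x}"

end

theory Submission
  imports Defs
begin


typedef (overloaded) ('a::euclidean_space) bidx = "Basis :: 'a set"
  using nonempty_Basis by blast

instance bidx :: (euclidean_space) finite
proof
  show "finite (UNIV :: 'a bidx set)"
    by (metis finite_Basis finite_imageI type_definition.Abs_image type_definition_bidx)
qed

instantiation bidx :: (euclidean_space) wellorder
begin
definition "less_eq_bidx (x::'a bidx) y \<longleftrightarrow> to_nat_on (UNIV::'a bidx set) x \<le> to_nat_on (UNIV::'a bidx set) y"
definition "less_bidx (x::'a bidx) y \<longleftrightarrow> to_nat_on (UNIV::'a bidx set) x < to_nat_on (UNIV::'a bidx set) y"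
instance
proof
  have inj: "inj (to_nat_on (UNIV::'a bidx set))"
    by (simp add: countable_finite inj_on_to_nat_on)
  show "(x::'a bidx) < y \<longleftrightarrow> x \<le> y \<and> \<not> y \<le> x" for x y by (auto simp: less_eq_bidx_def less_bidx_def)
  show "(x::'a bidx) \<le> x" for x by (auto simp: less_eq_bidx_def)
  show "(x::'a bidx) \<le> y \<Longrightarrow> y \<le> z \<Longrightarrow> x \<le> z" for x y z by (auto simp: less_eq_bidx_def)
  show "(x::'a bidx) \<le> y \<Longrightarrow> y \<le> x \<Longrightarrow> x = y" for x y using inj by (auto simp: less_eq_bidx_def inj_eq)
  show "(x::'a bidx) \<le> y \<or> y \<le> x" for x y by (auto simp: less_eq_bidx_def)
  show "P a" if "\<And>x::'a bidx. (\<And>y. y < x \<Longrightarrow> P y) \<Longrightarrow> P x" for P a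
  proof -
    have "\<forall>a. to_nat_on (UNIV::'a bidx set) a = k \<longrightarrow> P a" for k
      by (induction k rule: less_induct) (metis less_bidx_def that)
    then show ?thesis by blast
  qed
qed
end



definition Lmap :: "'a::euclidean_space \<Rightarrow> real ^ ('a bidx)" where
  "Lmap y = (\<chi> i. y \<bullet> Rep_bidx i)"

definition Linv :: "real ^ ('a::euclidean_space bidx) \<Rightarrow> 'a" where
  "Linv v = (\<Sum>i\<in>UNIV. (v $ i) *\<^sub>R Rep_bidx i)"

lemma sum_bidx: "(\<Sum>i\<in>UNIV. f (Rep_bidx i)) = (\<Sum>b\<in>(Basis::'a::euclidean_space set). f b)"
proof -
  have "(\<Sum>b\<in>(Basis::'a set). f b) = (\<Sum>b\<in>Rep_bidx ` UNIV. f b)"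
    by (simp add: type_definition.Rep_range[OF type_definition_bidx])
  also have "\<dots> = (\<Sum>i\<in>UNIV. f (Rep_bidx i))"
    by (subst sum.reindex) (auto simp: inj_def Rep_bidx_inject)
  finally show ?thesis by simp
qed

lemma prod_bidx: "(\<Prod>i\<in>UNIV. f (Rep_bidx i)) = (\<Prod>b\<in>(Basis::'a::euclidean_space set). f b)"
proof -
  have "(\<Prod>b\<in>(Basis::'a set). f b) = (\<Prod>b\<in>Rep_bidx ` UNIV. f b)"
    by (simp add: type_definition.Rep_range[OF type_definition_bidx])
  also have "\<dots> = (\<Prod>i\<in>UNIV. f (Rep_bidx i))"
    by (subst prod.reindex) (auto simp: inj_def Rep_bidx_inject)
  finally show ?thesis by simp
qed

lemma Rep_bidx_Basis: "Rep_bidx i \<in> Basis"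
  using Rep_bidx by blast

lemma Linv_inner: "Linv v \<bullet> Rep_bidx j = v $ j"
proof -
  have "Linv v \<bullet> Rep_bidx j = (\<Sum>i\<in>UNIV. (v $ i) * (Rep_bidx i \<bullet> Rep_bidx j))"
    by (simp add: Linv_def inner_sum_left)
  also have "\<dots> = (\<Sum>i\<in>UNIV. if i = j then v $ i else 0)"
    by (intro sum.cong refl) (auto simp: inner_Basis Rep_bidx_Basis Rep_bidx_inject)
  finally show ?thesis by simp
qed

lemma Lmap_Linv [simp]: "Lmap (Linv v) = v"
  by (simp add: Lmap_def Linv_inner vec_eq_iff)

lemma Linv_Lmap [simp]: "Linv (Lmap y) = y"
proof -
  have "Linv (Lmap y) = (\<Sum>i\<in>UNIV. (y \<bullet> Rep_bidx i) *\<^sub>R Rep_bidx i)"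
    by (simp add: Linv_def Lmap_def)
  also have "\<dots> = (\<Sum>b\<in>Basis. (y \<bullet> b) *\<^sub>R b)"
    by (rule sum_bidx)
  finally show ?thesis by (simp add: euclidean_representation)
qed

lemma linear_Lmap: "linear Lmap"
  by (auto simp: linear_iff Lmap_def vec_eq_iff inner_add_left)

lemma linear_Linv: "linear Linv"
  unfolding linear_iff Linv_def
  by (auto simp: scaleR_add_left sum.distrib scaleR_sum_right)

lemma Lmap_inner: "Lmap y \<bullet> Lmap z = y \<bullet> z"
proof -
  have "Lmap y \<bullet> Lmap z = (\<Sum>i\<in>UNIV. (y \<bullet> Rep_bidx i) * (z \<bullet> Rep_bidx i))"
    unfolding inner_vec_def Lmap_def by (simp only: vec_lambda_beta inner_real_def)
  also have "\<dots> = (\<Sum>b\<in>Basis. (y \<bullet> b) * (z \<bullet> b))"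
    by (rule sum_bidx)
  also have "\<dots> = y \<bullet> z"
    by (rule euclidean_inner[symmetric])
  finally show ?thesis .
qed

lemma Lmap_meas [measurable]: "Lmap \<in> borel_measurable borel"
  by (intro borel_measurable_continuous_onI linear_continuous_on linear_conv_bounded_linear[THEN iffD1] linear_Lmap)

lemma Linv_meas [measurable]: "Linv \<in> borel_measurable borel"
  by (intro borel_measurable_continuous_onI linear_continuous_on linear_conv_bounded_linear[THEN iffD1] linear_Linv)

lemma Basis_vec_range: "(Basis :: (real^'n) set) = range (\<lambda>i. axis i 1)"
  by (auto simp: Basis_vec_def)

lemma prod_Basis_vec: "(\<Prod>b\<in>(Basis :: (real^'n) set). f b) = (\<Prod>i\<in>UNIV. f (axis i 1))"
  unfolding Basis_vec_range
  by (subst prod.reindex) (auto simp: inj_def axis_eq_axis)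

lemma distr_Lmap: "distr (lborel :: 'a::euclidean_space measure) borel Lmap = lborel"
proof (rule lborel_eqI[symmetric])
  fix l u :: "real ^ ('a bidx)"
  assume le: "\<And>b. b \<in> Basis \<Longrightarrow> l \<bullet> b \<le> u \<bullet> b"
  have le': "l $ i \<le> u $ i" for i using le[of "axis i 1"] by (simp add: inner_axis)
  have pre: "Lmap -` box l u = box (Linv l) (Linv u)"
  proof -
    have "y \<in> box l u \<longleftrightarrow> (\<forall>i. l $ i < y $ i \<and> y $ i < u $ i)" for y :: "real ^ ('a bidx)"
      by (simp add: mem_box_cart)
    moreover have "x \<in> box (Linv l) (Linv u) \<longleftrightarrow> (\<forall>i. l $ i < Lmap x $ i \<and> Lmap x $ i < u $ i)" for x :: 'a
    proof -
      have "x \<in> box (Linv l) (Linv u) \<longleftrightarrow> (\<forall>b\<in>Basis. Linv l \<bullet> b < x \<bullet> b \<and> x \<bullet> b < Linv u \<bullet> b)"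
        by (simp add: mem_box)
      also have "\<dots> \<longleftrightarrow> (\<forall>i. Linv l \<bullet> Rep_bidx i < x \<bullet> Rep_bidx i \<and> x \<bullet> Rep_bidx i < Linv u \<bullet> Rep_bidx i)"
        by (metis Rep_bidx_Basis type_definition.Rep_range[OF type_definition_bidx] rangeE)
      finally show ?thesis by (simp add: Linv_inner Lmap_def)
    qed
    ultimately show ?thesis by auto
  qed
  have "emeasure (distr lborel borel Lmap) (box l u) = emeasure lborel (box (Linv l) (Linv u) :: 'a set)"
    by (subst emeasure_distr) (auto simp: pre)
  also have "\<dots> = (\<Prod>b\<in>Basis. (Linv u - Linv l) \<bullet> b)"
  proof -
    have "\<forall>b\<in>Basis. Linv l \<bullet> b \<le> Linv u \<bullet> b"
      by (metis Linv_inner le' type_definition.Rep_range[OF type_definition_bidx] rangeE)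
    then show ?thesis by (simp add: emeasure_lborel_box_eq)
  qed
  also have "(\<Prod>b\<in>Basis. (Linv u - Linv l) \<bullet> b) = (\<Prod>i\<in>UNIV. (Linv u - Linv l) \<bullet> Rep_bidx i)"
    by (rule prod_bidx[symmetric])
  also have "\<dots> = (\<Prod>b\<in>Basis. (u - l) \<bullet> b)"
    by (simp add: prod_Basis_vec inner_diff_left Linv_inner inner_axis)
  finally show "emeasure (distr lborel borel Lmap) (box l u) = (\<Prod>b\<in>Basis. (u - l) \<bullet> b)" .
qed simp



lemma distr_orth_cart:
  fixes T :: "real^'n::{finite,wellorder} \<Rightarrow> real^'n::{finite,wellorder}"
  assumes T: "orthogonal_transformation T"
  shows "distr lborel borel T = lborel"
proof (rule lborel_eqI[symmetric])
  have lin: "linear T" using T orthogonal_transformation_linear by blast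
  have Tm[measurable]: "T \<in> borel_measurable borel"
    by (intro borel_measurable_continuous_onI linear_continuous_on linear_conv_bounded_linear[THEN iffD1] lin)
  have Ti: "orthogonal_transformation (inv T)" using T orthogonal_transformation_inv by blast
  have bij: "bij T" using T orthogonal_transformation_bij by blast
  fix l u :: "(real, 'n::{finite,wellorder}) vec"
  assume le: "\<And>b. b \<in> Basis \<Longrightarrow> l \<bullet> b \<le> u \<bullet> b"
  have pre: "T -` box l u = inv T ` box l u"
    using bij by (simp add: bij_vimage_eq_inv_image)
  have "emeasure (distr lborel borel T) (box l u) = emeasure lborel (T -` box l u)"
    by (subst emeasure_distr) auto
  also have "\<dots> = emeasure lebesgue (inv T ` box l u)"
  proof -
    have "T -` box l u \<in> sets borel" using measurable_sets[OF Tm, of "box l u"] by simp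
    then show ?thesis by (simp add: pre[symmetric])
  qed
  also have "\<dots> = ennreal (measure lebesgue (inv T ` box l u))"
    by (intro emeasure_eq_measure2 measurable_orthogonal_image Ti) auto
  also have "\<dots> = ennreal (measure lebesgue (box l u))"
    using measure_orthogonal_image[OF Ti, of "box l u"] by auto
  also have "\<dots> = emeasure lebesgue (box l u)"
    by (intro emeasure_eq_measure2[symmetric]) auto
  also have "\<dots> = emeasure lborel (box l u)" by simp
  also have "\<dots> = (\<Prod>b\<in>Basis. (u - l) \<bullet> b)"
    using le by (simp add: emeasure_lborel_box_eq)
  finally show "emeasure (distr lborel borel T) (box l u) = (\<Prod>b\<in>Basis. (u - l) \<bullet> b)" .
qed simp

lemma distr_orth:
  fixes T :: "'a::euclidean_space \<Rightarrow> 'a"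
  assumes T: "orthogonal_transformation T"
  shows "distr lborel borel T = lborel"
proof -
  have lin: "linear T" using T orthogonal_transformation_linear by blast
  have [measurable]: "T \<in> borel_measurable borel"
    by (intro borel_measurable_continuous_onI linear_continuous_on linear_conv_bounded_linear[THEN iffD1] lin)
  define T' :: "real^('a bidx) \<Rightarrow> real^('a bidx)" where "T' = (\<lambda>v. Lmap (T (Linv v)))"
  have T': "orthogonal_transformation T'"
    unfolding orthogonal_transformation_def T'_def
  proof (intro conjI allI)
    show "linear (\<lambda>v. Lmap (T (Linv v)))"
      using linear_compose[OF linear_compose[OF linear_Linv lin] linear_Lmap] by (simp add: o_def)
    fix v w :: "real^('a bidx)"
    have "Lmap (T (Linv v)) \<bullet> Lmap (T (Linv w)) = T (Linv v) \<bullet> T (Linv w)" by (rule Lmap_inner)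
    also have "\<dots> = Linv v \<bullet> Linv w" using T by (simp add: orthogonal_transformation_def)
    also have "\<dots> = Lmap (Linv v) \<bullet> Lmap (Linv w)" by (rule Lmap_inner[symmetric])
    finally show "Lmap (T (Linv v)) \<bullet> Lmap (T (Linv w)) = v \<bullet> w" by simp
  qed
  have [measurable]: "T' \<in> borel_measurable borel" unfolding T'_def by measurable
  have la: "(lborel :: 'a measure) = distr (lborel :: (real^('a bidx)) measure) borel Linv"
  proof -
    have "distr (lborel :: (real^('a bidx)) measure) borel Linv = distr (distr (lborel :: 'a measure) borel Lmap) borel Linv"
      by (simp add: distr_Lmap)
    also have "\<dots> = distr (lborel :: 'a measure) borel (Linv \<circ> Lmap)"
      by (subst distr_distr) auto
    also have "\<dots> = distr (lborel :: 'a measure) borel (\<lambda>x. x)"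
      by (simp add: o_def)
    also have "\<dots> = lborel" by (simp add: distr_id2)
    finally show ?thesis
      using distr_Lmap by metis
  qed
  have "distr (lborel :: 'a measure) borel T = distr (distr lborel borel Linv) borel T"
    using la by metis
  also have "\<dots> = distr lborel borel (T \<circ> Linv)"
    by (subst distr_distr) auto
  also have "T \<circ> Linv = Linv \<circ> T'"
    by (simp add: T'_def o_def)
  also have "distr lborel borel (Linv \<circ> T') = distr (distr lborel borel T') borel Linv"
    by (subst distr_distr) auto
  also have "\<dots> = distr lborel borel Linv"
    by (simp add: distr_orth_cart[OF T'])
  also have "\<dots> = lborel" using la by metis
  finally show ?thesis .
qed



lemma house_exists:
  fixes x b :: "'a::euclidean_space"
  assumes x: "norm x = 1" and b: "norm b = 1"
  obtains T where "orthogonal_transformation T" "T b = x"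
proof (cases "x = b")
  case True
  then show ?thesis using that[of "\<lambda>y. y"] by simp
next
  case False
  define w where "w = x - b"
  have w0: "w \<bullet> w \<noteq> 0" using False by (simp add: w_def)
  define T where "T = (\<lambda>y. y - (2 * (w \<bullet> y) / (w \<bullet> w)) *\<^sub>R w)"
  have "orthogonal_transformation T"
    unfolding orthogonal_transformation_def
  proof (intro conjI allI)
    show "linear T" unfolding T_def
      by (auto simp: linear_iff inner_add_right scaleR_add_left add_divide_distrib algebra_simps)
    fix v u
    show "T v \<bullet> T u = v \<bullet> u"
      using w0 by (simp add: T_def inner_diff_left inner_diff_right inner_commute field_simps)
  qed
  moreover have "T b = x"
  proof -
    have xx: "x \<bullet> x = 1" "b \<bullet> b = 1" using x b by (simp_all add: norm_eq_1)
    have ww: "w \<bullet> w = 2 - 2 * (x \<bullet> b)" using xx by (simp add: w_def inner_diff_left inner_diff_right inner_commute)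
    have wb: "w \<bullet> b = x \<bullet> b - 1" using xx by (simp add: w_def inner_diff_left)
    have e: "2 * (w \<bullet> b) = - (w \<bullet> w)" using ww wb by linarith
    have "2 * (w \<bullet> b) / (w \<bullet> w) = -1" unfolding e using w0 by simp
    then show ?thesis by (simp add: T_def w_def)
  qed
  ultimately show ?thesis using that by blast
qed

lemma beta_integral_real:
  assumes a: "a \<ge> (0::real)"
  shows "(\<integral>\<^sup>+x. indicator {-1..1} x * ennreal ((1 - x\<^sup>2) powr a) \<partial>lborel) =
      ennreal (Beta (1 / 2) (a + 1))"
proof -
  have "((\<lambda>t. t powr (-1 / 2) * (1 - t) powr a) has_integral
          Beta (1 / 2) (a + 1)) {0..1}"
    using has_integral_Beta_real[of "1/2" "a + 1"] a by simp
  from nn_integral_has_integral_lebesgue[OF _ this] have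
     "ennreal (Beta (1 / 2) (a + 1)) =
        nn_integral lborel (\<lambda>t. ennreal (t powr (-1 / 2) * (1 - t) powr a *
                                indicator {0^2..1^2} t))"
    by (simp add: mult_ac ennreal_mult' ennreal_indicator)
  also have "\<dots> = (\<integral>\<^sup>+ x. ennreal (x\<^sup>2 powr - (1 / 2) * (1 - x\<^sup>2) powr a * (2 * x) *
                          indicator {0..1} x) \<partial>lborel)"
    by (subst nn_integral_substitution[where g = "\<lambda>x. x ^ 2" and g' = "\<lambda>x. 2 * x"])
       (auto intro!: derivative_eq_intros continuous_intros simp: set_borel_measurable_def)
  also have "\<dots> = (\<integral>\<^sup>+ x. 2 * ennreal ((1 - x\<^sup>2) powr a * indicator {0..1} x) \<partial>lborel)"
    by (intro nn_integral_cong_AE AE_I[of _ _ "{0}"])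
       (auto simp: indicator_def powr_minus powr_half_sqrt field_split_simps ennreal_mult')
  also have "\<dots> = (\<integral>\<^sup>+ x. ennreal ((1 - x\<^sup>2) powr a * indicator {0..1} x) \<partial>lborel) +
                    (\<integral>\<^sup>+ x. ennreal ((1 - x\<^sup>2) powr a * indicator {0..1} x) \<partial>lborel)"
    (is "_ = ?I + _") by (simp add: mult_2 nn_integral_add)
  also have "?I = (\<integral>\<^sup>+ x. ennreal ((1 - x\<^sup>2) powr a * indicator {-1..0} x) \<partial>lborel)"
    by (subst nn_integral_real_affine[of _ "-1" 0])
       (auto simp: indicator_def intro!: nn_integral_cong)
  hence "?I + ?I = \<dots> + ?I" by simp
  also have "\<dots> = (\<integral>\<^sup>+ x. ennreal ((1 - x\<^sup>2) powr a *
                    (indicator {-1..0} x + indicator{0..1} x)) \<partial>lborel)"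
    by (subst nn_integral_add [symmetric]) (auto simp: algebra_simps)
  also have "\<dots> = (\<integral>\<^sup>+ x. ennreal ((1 - x\<^sup>2) powr a * indicator {-1..1} x) \<partial>lborel)"
    by (intro nn_integral_cong_AE AE_I[of _ _ "{0}"]) (auto simp: indicator_def)
  also have "\<dots> = (\<integral>\<^sup>+x. indicator {-1..1} x * ennreal ((1 - x\<^sup>2) powr a) \<partial>lborel)"
    by (intro nn_integral_cong) (auto simp: indicator_def)
  finally show ?thesis ..
qed



lemma layer:
  assumes q: "q \<ge> 1" and z: "z \<ge> 0"
  shows "ennreal (z powr q) = (\<integral>\<^sup>+ t. indicator {0<..<z} t * ennreal (q * t powr (q - 1)) \<partial>lborel)"
proof -
  have "((\<lambda>t. q * t powr (q-1)) has_integral (z powr q - 0 powr q)) {0..z}"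
  proof (rule fundamental_theorem_of_calculus_interior)
    show "continuous_on {0..z} (\<lambda>t. t powr q)"
      using q by (intro continuous_on_powr') (auto intro: continuous_intros)
    fix x assume "x \<in> {0<..<z}"
    then show "((\<lambda>t. t powr q) has_vector_derivative q * x powr (q - 1)) (at x)"
      using has_real_derivative_powr[of x q] by (simp add: has_real_derivative_iff_has_vector_derivative)
  qed (use z in auto)
  then have "((\<lambda>t. q * t powr (q-1)) has_integral (z powr q)) {0..z}"
    using q by simp
  from nn_integral_has_integral_lebesgue'[OF _ this]
  have "(\<integral>\<^sup>+ t. ennreal (q * t powr (q - 1)) * indicator {0..z} t \<partial>lborel) = ennreal (z powr q)"
    using q by simp
  also have "(\<integral>\<^sup>+ t. ennreal (q * t powr (q - 1)) * indicator {0..z} t \<partial>lborel) =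
      (\<integral>\<^sup>+ t. indicator {0<..<z} t * ennreal (q * t powr (q - 1)) \<partial>lborel)"
  proof (intro nn_integral_cong_AE)
    have "AE t in lborel. t \<notin> {0, z}"
      by (intro AE_not_in countable_imp_null_set_lborel) auto
    then show "AE t in lborel. ennreal (q * t powr (q - 1)) * indicator {0..z} t =
        indicator {0<..<z} t * ennreal (q * t powr (q - 1))"
      by eventually_elim (auto simp: indicator_def)
  qed
  finally show ?thesis ..
qed

lemma int1:
  assumes r: "r > 0" and q: "q \<ge> 1" and V: "V \<ge> 0"
  shows "(\<integral>\<^sup>+ t. indicator {0<..<r} t * ennreal (q * t powr (q - 1) * (V * r ^ m - V * t ^ m)) \<partial>lborel)
     = ennreal (V * (m / (m + q)) * r powr (m + q))"
proof -
  define F where "F = (\<lambda>t. V * r ^ m * t powr q - V * (q / (m + q)) * t powr (m + q))"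
  have mq: "real m + q > 0" using q by linarith
  have "((\<lambda>t. q * t powr (q - 1) * (V * r ^ m - V * t ^ m)) has_integral (F r - F 0)) {0..r}"
  proof (rule fundamental_theorem_of_calculus_interior)
    show "continuous_on {0..r} F"
      unfolding F_def using q mq
      by (intro continuous_intros continuous_on_powr') (auto intro: continuous_intros)
    fix x assume x: "x \<in> {0<..<r}"
    have "(F has_real_derivative (V * r ^ m * (q * x powr (q - 1)) - V * (q / (m + q)) * ((m + q) * x powr (m + q - 1)))) (at x)"
      unfolding F_def using x
      by (intro DERIV_diff DERIV_cmult has_real_derivative_powr) auto
    moreover have "V * r ^ m * (q * x powr (q - 1)) - V * (q / (m + q)) * ((m + q) * x powr (m + q - 1))
        = q * x powr (q - 1) * (V * r ^ m - V * x ^ m)"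
    proof -
      have "x powr (m + q - 1) = x powr (q - 1) * x ^ m"
        using x by (simp add: powr_add[symmetric] powr_realpow[symmetric] algebra_simps)
      then show ?thesis using mq by (simp add: field_simps)
    qed
    ultimately show "(F has_vector_derivative q * x powr (q - 1) * (V * r ^ m - V * x ^ m)) (at x)"
      by (simp add: has_real_derivative_iff_has_vector_derivative)
  qed (use r in auto)
  moreover have "F r - F 0 = V * (m / (m + q)) * r powr (m + q)"
  proof -
    have "r ^ m * r powr q = r powr (m + q)"
      using r by (simp add: powr_add powr_realpow)
    then show ?thesis using mq q unfolding F_def by (simp add: field_simps)
  qed
  ultimately have I: "((\<lambda>t. q * t powr (q - 1) * (V * r ^ m - V * t ^ m)) has_integral (V * (m / (m + q)) * r powr (m + q))) {0..r}"
    by simp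
  have nn: "0 \<le> q * t powr (q - 1) * (V * r ^ m - V * t ^ m)" if "t \<in> {0..r}" for t
    using that q V by (intro mult_nonneg_nonneg) (auto intro!: mult_left_mono power_mono)
  from nn_integral_has_integral_lebesgue'[OF nn I]
  have "(\<integral>\<^sup>+ t. ennreal (q * t powr (q - 1) * (V * r ^ m - V * t ^ m)) * indicator {0..r} t \<partial>lborel)
      = ennreal (V * (m / (m + q)) * r powr (m + q))" by simp
  also have "(\<integral>\<^sup>+ t. ennreal (q * t powr (q - 1) * (V * r ^ m - V * t ^ m)) * indicator {0..r} t \<partial>lborel) =
      (\<integral>\<^sup>+ t. indicator {0<..<r} t * ennreal (q * t powr (q - 1) * (V * r ^ m - V * t ^ m)) \<partial>lborel)"
  proof (intro nn_integral_cong_AE)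
    have "AE t in lborel. t \<notin> {0, r}"
      by (intro AE_not_in countable_imp_null_set_lborel) auto
    then show "AE t in lborel. ennreal (q * t powr (q - 1) * (V * r ^ m - V * t ^ m)) * indicator {0..r} t =
        indicator {0<..<r} t * ennreal (q * t powr (q - 1) * (V * r ^ m - V * t ^ m))"
      by eventually_elim (auto simp: indicator_def)
  qed
  finally show ?thesis .
qed



lemma radial_moment:
  fixes A :: "'i set" and q r :: real
  assumes A: "finite A" and q: "q \<ge> 1" and r: "r > 0"
  shows "(\<integral>\<^sup>+ f. indicator {f. sqrt (\<Sum>i\<in>A. (f i)\<^sup>2) \<le> r} f * ennreal (sqrt (\<Sum>i\<in>A. (f i)\<^sup>2) powr q) \<partial>Pi\<^sub>M A (\<lambda>_. lborel))
     = ennreal (unit_ball_vol (card A) * (card A / (card A + q)) * r powr (card A + q))"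
proof -
  interpret product_sigma_finite "\<lambda>_::'i. lborel::real measure" by standard
  define M where "M = Pi\<^sub>M A (\<lambda>_. lborel::real measure)"
  interpret P: sigma_finite_measure M
    unfolding M_def using A by (rule sigma_finite)
  interpret pair_sigma_finite M "lborel::real measure" ..
  define s where "s = (\<lambda>f::'i \<Rightarrow> real. sqrt (\<Sum>i\<in>A. (f i)\<^sup>2))"
  define V where "V = unit_ball_vol (card A)"
  define c where "c = (\<lambda>t::real. ennreal (q * t powr (q - 1)))"
  have sm[measurable]: "s \<in> borel_measurable M" unfolding s_def M_def by measurable
  have ind: "(\<lambda>x. indicator {0<..<s (fst x)} (snd x) :: ennreal) \<in> borel_measurable (M \<Otimes>\<^sub>M lborel)"
  proof -
    have "(\<lambda>x. indicator {0<..<s (fst x)} (snd x) :: ennreal) = (\<lambda>x. if 0 < snd x \<and> snd x < s (fst x) then 1 else 0)"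
      by (auto simp: indicator_def fun_eq_iff)
    also have "\<dots> \<in> borel_measurable (M \<Otimes>\<^sub>M lborel)" by measurable
    finally show ?thesis .
  qed
  have s0: "s f \<ge> 0" for f unfolding s_def by (simp add: sum_nonneg)
  have "(\<integral>\<^sup>+ f. indicator {f. s f \<le> r} f * ennreal (s f powr q) \<partial>M) =
      (\<integral>\<^sup>+ f. \<integral>\<^sup>+ t. indicator {f. s f \<le> r} f * (indicator {0<..<s f} t * c t) \<partial>lborel \<partial>M)"
    by (intro nn_integral_cong) (simp add: layer[OF q s0] nn_integral_cmult c_def)
  also have "\<dots> = (\<integral>\<^sup>+ t. \<integral>\<^sup>+ f. indicator {f. s f \<le> r} f * (indicator {0<..<s f} t * c t) \<partial>M \<partial>lborel)"
  proof (rule Fubini'[symmetric])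
    have "(\<lambda>(x, y). indicator {f. s f \<le> r} x * (indicator {0<..<s x} y * c y)) =
        (\<lambda>x. if s (fst x) \<le> r \<and> 0 < snd x \<and> snd x < s (fst x) then ennreal (q * snd x powr (q - 1)) else 0)"
      by (auto simp: indicator_def fun_eq_iff c_def)
    also have "\<dots> \<in> borel_measurable (M \<Otimes>\<^sub>M lborel)" by measurable
    finally show "(\<lambda>(x, y). indicator {f. s f \<le> r} x * (indicator {0<..<s x} y * c y)) \<in> borel_measurable (M \<Otimes>\<^sub>M lborel)" .
  qed
  also have "\<dots> = (\<integral>\<^sup>+ t. indicator {0<..<r} t * ennreal (q * t powr (q - 1) * (V * r ^ card A - V * t ^ card A)) \<partial>lborel)"
  proof (intro nn_integral_cong)
    fix t :: real
    have "(\<integral>\<^sup>+ f. indicator {f. s f \<le> r} f * (indicator {0<..<s f} t * c t) \<partial>M) =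
        (\<integral>\<^sup>+ f. c t * indicator ({f. 0 < t \<and> t < s f \<and> s f \<le> r} \<inter> space M) f \<partial>M)"
      by (intro nn_integral_cong) (auto simp: indicator_def)
    also have "\<dots> = c t * emeasure M ({f. 0 < t \<and> t < s f \<and> s f \<le> r} \<inter> space M)"
      by (subst nn_integral_cmult) (auto simp: nn_integral_indicator)
    also have "\<dots> = indicator {0<..<r} t * ennreal (q * t powr (q - 1) * (V * r ^ card A - V * t ^ card A))"
    proof (cases "0 < t \<and> t < r")
      case True
      have eq: "{f. 0 < t \<and> t < s f \<and> s f \<le> r} \<inter> space M =
          ({f. s f \<le> r} \<inter> space M) - ({f. s f \<le> t} \<inter> space M)"
        using True by auto
      have "emeasure M ({f. 0 < t \<and> t < s f \<and> s f \<le> r} \<inter> space M) =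
          emeasure M ({f. s f \<le> r} \<inter> space M) - emeasure M ({f. s f \<le> t} \<inter> space M)"
        unfolding eq
        by (rule emeasure_Diff) (use True in \<open>auto simp: M_def s_def emeasure_cball_aux[OF A]\<close>)
      also have "\<dots> = ennreal (V * r ^ card A) - ennreal (V * t ^ card A)"
        using True r unfolding M_def s_def V_def by (simp add: emeasure_cball_aux[OF A])
      also have "\<dots> = ennreal (V * r ^ card A - V * t ^ card A)"
        using True by (subst ennreal_minus) (auto simp: V_def)
      finally show ?thesis using True q
        by (simp add: c_def ennreal_mult'[symmetric])
    next
      case False
      then have "{f. 0 < t \<and> t < s f \<and> s f \<le> r} \<inter> space M = {}" by auto
      then show ?thesis using False by simp
    qed
    finally show "(\<integral>\<^sup>+ f. indicator {f. s f \<le> r} f * (indicator {0<..<s f} t * c t) \<partial>M) =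
        indicator {0<..<r} t * ennreal (q * t powr (q - 1) * (V * r ^ card A - V * t ^ card A))" .
  qed
  also have "\<dots> = ennreal (V * (card A / (card A + q)) * r powr (card A + q))"
    by (rule int1[OF r q]) (simp add: V_def)
  finally show ?thesis unfolding s_def M_def V_def .
qed



lemma main_pim:
  fixes A :: "'i set" and p :: real
  assumes A: "finite A" and iA: "i \<notin> A" and p: "p \<ge> 1"
  shows "(\<integral>\<^sup>+ f. indicator {f. sqrt (\<Sum>j\<in>insert i A. (f j)\<^sup>2) \<le> 1} f * ennreal (sqrt (\<Sum>j\<in>A. (f j)\<^sup>2) powr p) \<partial>Pi\<^sub>M (insert i A) (\<lambda>_. lborel))
     = ennreal (unit_ball_vol (card A) * (card A / (card A + p)) * Beta (1/2) ((card A + p) / 2 + 1))"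
proof -
  interpret product_sigma_finite "\<lambda>_::'i. lborel::real measure" by standard
  define C where "C = unit_ball_vol (card A) * (card A / (card A + p))"
  have C0: "C \<ge> 0" unfolding C_def using p by auto
  have "(\<integral>\<^sup>+ f. indicator {f. sqrt (\<Sum>j\<in>insert i A. (f j)\<^sup>2) \<le> 1} f * ennreal (sqrt (\<Sum>j\<in>A. (f j)\<^sup>2) powr p) \<partial>Pi\<^sub>M (insert i A) (\<lambda>_. lborel))
     = (\<integral>\<^sup>+ y. \<integral>\<^sup>+ x. indicator {f. sqrt (\<Sum>j\<in>insert i A. (f j)\<^sup>2) \<le> 1} (x(i := y)) * ennreal (sqrt (\<Sum>j\<in>A. ((x(i := y)) j)\<^sup>2) powr p) \<partial>Pi\<^sub>M A (\<lambda>_. lborel) \<partial>lborel)"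
    using A iA by (subst product_nn_integral_insert_rev) auto
  also have "\<dots> = (\<integral>\<^sup>+ y. indicator {-1..1} y * ennreal (C * (1 - y\<^sup>2) powr ((card A + p) / 2)) \<partial>lborel)"
  proof (intro nn_integral_cong_AE)
    have "AE y in lborel. y \<notin> {-1, 1}"
      by (intro AE_not_in countable_imp_null_set_lborel) auto
    then show "AE y in lborel. (\<integral>\<^sup>+ x. indicator {f. sqrt (\<Sum>j\<in>insert i A. (f j)\<^sup>2) \<le> 1} (x(i := y)) * ennreal (sqrt (\<Sum>j\<in>A. ((x(i := y)) j)\<^sup>2) powr p) \<partial>Pi\<^sub>M A (\<lambda>_. lborel))
        = indicator {-1..1} y * ennreal (C * (1 - y\<^sup>2) powr ((card A + p) / 2))"
    proof eventually_elim
      case (elim y)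
      have sA: "(\<Sum>j\<in>A. ((x(i := y)) j)\<^sup>2) = (\<Sum>j\<in>A. (x j)\<^sup>2)" for x :: "'i \<Rightarrow> real"
        using iA by (intro sum.cong) auto
      have sI: "(\<Sum>j\<in>insert i A. ((x(i := y)) j)\<^sup>2) = y\<^sup>2 + (\<Sum>j\<in>A. (x j)\<^sup>2)" for x :: "'i \<Rightarrow> real"
        using A iA sA by simp
      show ?case
      proof (cases "\<bar>y\<bar> < 1")
        case True
        define \<rho> where "\<rho> = sqrt (1 - y\<^sup>2)"
        have y2: "y\<^sup>2 < 1" using True by (simp add: abs_square_less_1)
        have \<rho>: "\<rho> > 0" unfolding \<rho>_def using y2 by simp
        have cond: "sqrt (y\<^sup>2 + S) \<le> 1 \<longleftrightarrow> sqrt S \<le> \<rho>" if "S \<ge> 0" for S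
          unfolding \<rho>_def using that y2 by (simp add: algebra_simps)
        have "(\<integral>\<^sup>+ x. indicator {f. sqrt (\<Sum>j\<in>insert i A. (f j)\<^sup>2) \<le> 1} (x(i := y)) * ennreal (sqrt (\<Sum>j\<in>A. ((x(i := y)) j)\<^sup>2) powr p) \<partial>Pi\<^sub>M A (\<lambda>_. lborel))
            = (\<integral>\<^sup>+ x. indicator {f. sqrt (\<Sum>j\<in>A. (f j)\<^sup>2) \<le> \<rho>} x * ennreal (sqrt (\<Sum>j\<in>A. (x j)\<^sup>2) powr p) \<partial>Pi\<^sub>M A (\<lambda>_. lborel))"
        proof (intro nn_integral_cong)
          fix x :: "'i \<Rightarrow> real"
          have S0: "(\<Sum>j\<in>A. (x j)\<^sup>2) \<ge> 0" by (simp add: sum_nonneg)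
          show "indicator {f. sqrt (\<Sum>j\<in>insert i A. (f j)\<^sup>2) \<le> 1} (x(i := y)) * ennreal (sqrt (\<Sum>j\<in>A. ((x(i := y)) j)\<^sup>2) powr p)
              = indicator {f. sqrt (\<Sum>j\<in>A. (f j)\<^sup>2) \<le> \<rho>} x * ennreal (sqrt (\<Sum>j\<in>A. (x j)\<^sup>2) powr p)"
            by (simp only: indicator_def mem_Collect_eq sI sA cond[OF S0])
        qed
        also have "\<dots> = ennreal (C * \<rho> powr (card A + p))"
          unfolding C_def using radial_moment[OF A _ \<rho>, of p] p by simp
        also have "\<rho> powr (card A + p) = (1 - y\<^sup>2) powr ((card A + p) / 2)"
          unfolding \<rho>_def using y2 by (simp add: powr_half_sqrt[symmetric] powr_powr)
        moreover have "indicator {-1..1} y = (1::ennreal)" using True by (auto simp: indicator_def abs_less_iff)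
        ultimately show ?thesis by simp
      next
        case False
        then have y1: "\<bar>y\<bar> > 1" using elim by auto
        then have y2: "y\<^sup>2 > 1"
          by (metis abs_le_square_iff abs_one linorder_not_le one_power2)
        have gt: "(sqrt (y\<^sup>2 + S) \<le> 1) = False" if "S \<ge> 0" for S using that y2 by simp
        have z: "indicator {f. sqrt (\<Sum>j\<in>insert i A. (f j)\<^sup>2) \<le> 1} (x(i := y)) * ennreal (sqrt (\<Sum>j\<in>A. ((x(i := y)) j)\<^sup>2) powr p) = 0" for x :: "'i \<Rightarrow> real"
        proof -
          have S0: "(\<Sum>j\<in>A. (x j)\<^sup>2) \<ge> 0" by (simp add: sum_nonneg)
          show ?thesis by (simp only: indicator_def mem_Collect_eq sI gt[OF S0]) simp
        qed
        have "(\<integral>\<^sup>+ x. indicator {f. sqrt (\<Sum>j\<in>insert i A. (f j)\<^sup>2) \<le> 1} (x(i := y)) * ennreal (sqrt (\<Sum>j\<in>A. ((x(i := y)) j)\<^sup>2) powr p) \<partial>Pi\<^sub>M A (\<lambda>_. lborel)) = 0"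
          by (simp only: z) simp
        moreover have "indicator {-1..1} y = (0::ennreal)" using y1 by (auto simp: indicator_def abs_less_iff)
        ultimately show ?thesis by simp
      qed
    qed
  qed
  also have "\<dots> = (\<integral>\<^sup>+ y. ennreal C * (indicator {-1..1} y * ennreal ((1 - y\<^sup>2) powr ((card A + p) / 2))) \<partial>lborel)"
    using C0 by (intro nn_integral_cong) (simp add: ennreal_mult' mult_ac)
  also have "\<dots> = ennreal C * (\<integral>\<^sup>+ y. indicator {-1..1} y * ennreal ((1 - y\<^sup>2) powr ((card A + p) / 2)) \<partial>lborel)"
    by (subst nn_integral_cmult) auto
  also have "\<dots> = ennreal C * ennreal (Beta (1/2) ((card A + p) / 2 + 1))"
    using p by (subst beta_integral_real) auto
  also have "\<dots> = ennreal (C * Beta (1/2) ((card A + p) / 2 + 1))"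
    using C0 by (simp add: ennreal_mult')
  finally show ?thesis unfolding C_def .
qed



lemma omega_eq_ubv: "omega s = unit_ball_vol s"
  by (simp add: omega_def unit_ball_vol_def add.commute)

lemma beta_omega:
  fixes k :: real
  assumes k: "k \<ge> 2"
  shows "Beta (1/2) (k/2+1) = k/(k+1) * omega (k-1) / omega (k-2)"
proof -
  have g1: "Gamma (k/2 + 1) = k/2 * Gamma (k/2)"
    by (rule Gamma_plus1) (use k nonpos_Ints_nonpos in force)
  have g2: "Gamma (1/2 + (k/2 + 1)) = (k+1)/2 * Gamma ((k+1)/2)"
  proof -
    have e: "1/2 + (k/2 + 1) = (k+1)/2 + 1" by (simp add: field_simps)
    have "(k+1)/2 \<notin> \<int>\<^sub>\<le>\<^sub>0" using k nonpos_Ints_nonpos by force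
    then show ?thesis unfolding e by (rule Gamma_plus1)
  qed
  have o1: "omega (k-1) = pi powr ((k-2)/2) * sqrt pi / Gamma ((k+1)/2)"
  proof -
    have "pi powr ((k-1)/2) = pi powr ((k-2)/2 + 1/2)" by (simp add: field_simps)
    also have "\<dots> = pi powr ((k-2)/2) * sqrt pi" by (simp add: powr_add powr_half_sqrt)
    finally show ?thesis unfolding omega_def by (simp add: field_simps)
  qed
  have o2: "omega (k-2) = pi powr ((k-2)/2) / Gamma (k/2)"
    unfolding omega_def by (simp add: field_simps)
  have G1: "Gamma (k/2) > 0" using k by (intro Gamma_real_pos) auto
  have G2: "Gamma ((k+1)/2) > 0" using k by (intro Gamma_real_pos) auto
  have P: "pi powr ((k-2)/2) > 0" by simp
  have gen: "w0 * (k/2*g1) / ((k+1)/2 * g2) = k/(k+1) * (P * w0/g2) / (P/g1)"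
    if "P \<noteq> 0" "g1 \<noteq> 0" "g2 \<noteq> 0" "k + 1 \<noteq> 0" for w0 g1 g2 P :: real
  proof -
    have "k/(k+1) * (P * w0/g2) / (P/g1) = (k * w0 * g1) / ((k+1) * g2)"
      using that by (simp add: divide_simps)
    also have "\<dots> = w0 * (k/2*g1) / ((k+1)/2 * g2)"
      by (simp add: divide_simps)
    finally show ?thesis by simp
  qed
  show ?thesis
    unfolding Beta_def g1 g2 o1 o2 Gamma_one_half_real
    using G1 G2 P k gen[of "pi powr ((k-2)/2)" "Gamma (k/2)" "Gamma ((k+1)/2)" "sqrt pi"] by simp
qed

lemma constant_eq:
  fixes n p :: real
  assumes n: "n \<ge> 2" and p: "p \<ge> 1"
  shows "unit_ball_vol (n - 1) * ((n - 1) / (n - 1 + p)) * Beta (1/2) ((n - 1 + p) / 2 + 1)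
       = c_tilde n p * unit_ball_vol n"
proof -
  have b: "Beta (1/2) ((n - 1 + p) / 2 + 1) = (n-1+p)/(n+p) * omega (n+p-2) / omega (n+p-3)"
    using beta_omega[of "n - 1 + p"] n p by (simp add: algebra_simps)
  have pos: "omega s > 0" if "s \<ge> 0" for s using that by (simp add: omega_eq_ubv)
  have "omega n > 0" "omega (n+p-3) > 0" "n - 1 + p > 0" "n + p > 0" using n p by (auto intro!: pos)
  moreover have gen: "a * (m / kk) * (kk / s * b / c) = m * a * b / (s * d * c) * d"
    if "c \<noteq> 0" "d \<noteq> 0" "kk \<noteq> 0" "s \<noteq> 0" for a b c d m kk s :: real
    using that by (simp add: field_simps)
  ultimately show ?thesis
    unfolding b c_tilde_def omega_eq_ubv[symmetric]
    using gen[of "omega (n+p-3)" "omega n" "n - 1 + p" "n + p" "omega (n - 1)" "n - 1" "omega (n+p-2)"]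
    by simp
qed



definition Kc :: "nat \<Rightarrow> real \<Rightarrow> real" where
  "Kc n p = unit_ball_vol (real (n - 1)) * (real (n - 1) / (real (n - 1) + p)) * Beta (1/2) ((real (n - 1) + p) / 2 + 1)"

lemma bracket_meas[measurable]: "(\<lambda>y. bracket x y) \<in> borel_measurable borel"
  unfolding bracket_def by measurable

lemma cball_sets[measurable]: "cball (0::'a::euclidean_space) 1 \<in> sets borel"
  by simp

lemma g_meas[measurable]: "(\<lambda>y. indicator (cball (0::'a::euclidean_space) 1) y * ennreal (bracket x y powr p)) \<in> borel_measurable borel"
  by measurable

lemma ball_basis:
  fixes b :: "'a::euclidean_space" and p :: real
  assumes b: "b \<in> Basis" and p: "p \<ge> 1"
  shows "(\<integral>\<^sup>+ y. indicator (cball 0 1) y * ennreal (bracket b y powr p) \<partial>lborel) = ennreal (Kc DIM('a) p)"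
proof -
  define \<phi> where "\<phi> = (\<lambda>f. \<Sum>c\<in>(Basis::'a set). f c *\<^sub>R c)"
  have phm[measurable]: "\<phi> \<in> measurable (Pi\<^sub>M Basis (\<lambda>_. lborel)) borel"
    unfolding \<phi>_def by measurable
  have inn: "\<phi> f \<bullet> c = f c" if "c \<in> Basis" for f c
    using that unfolding \<phi>_def by simp
  have nrm: "(norm (\<phi> f))\<^sup>2 = (\<Sum>c\<in>Basis. (f c)\<^sup>2)" for f
  proof -
    have "(norm (\<phi> f))\<^sup>2 = \<phi> f \<bullet> \<phi> f" by (simp add: power2_norm_eq_inner)
    also have "\<dots> = (\<Sum>c\<in>Basis. (\<phi> f \<bullet> c) * (\<phi> f \<bullet> c))" by (rule euclidean_inner)
    also have "\<dots> = (\<Sum>c\<in>Basis. (f c)\<^sup>2)" by (intro sum.cong) (auto simp: inn power2_eq_square)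
    finally show ?thesis .
  qed
  have Bs: "(Basis::'a set) = insert b (Basis - {b})" using b by auto
  have ball: "\<phi> f \<in> cball 0 1 \<longleftrightarrow> sqrt (\<Sum>c\<in>Basis. (f c)\<^sup>2) \<le> 1" for f
  proof -
    have "\<phi> f \<in> cball 0 1 \<longleftrightarrow> norm (\<phi> f) \<le> 1" by simp
    also have "norm (\<phi> f) = sqrt ((norm (\<phi> f))\<^sup>2)" by simp
    finally show ?thesis unfolding nrm .
  qed
  have br: "bracket b (\<phi> f) = sqrt (\<Sum>c\<in>Basis - {b}. (f c)\<^sup>2)" for f
  proof -
    have nb: "norm b = 1" using b by simp
    have "(\<Sum>c\<in>Basis. (f c)\<^sup>2) = (f b)\<^sup>2 + (\<Sum>c\<in>Basis - {b}. (f c)\<^sup>2)"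
      using b by (simp add: sum.remove)
    then show ?thesis unfolding bracket_def nb nrm using inn[OF b] by (simp add: inner_commute)
  qed
  have "(\<integral>\<^sup>+ y. indicator (cball 0 1) y * ennreal (bracket b y powr p) \<partial>lborel) =
      (\<integral>\<^sup>+ y. indicator (cball 0 1) y * ennreal (bracket b y powr p) \<partial>distr (Pi\<^sub>M Basis (\<lambda>_. lborel)) borel \<phi>)"
    unfolding \<phi>_def by (subst lborel_eq) (rule refl)
  also have "\<dots> = (\<integral>\<^sup>+ f. indicator (cball 0 1) (\<phi> f) * ennreal (bracket b (\<phi> f) powr p) \<partial>Pi\<^sub>M Basis (\<lambda>_. lborel))"
    by (subst nn_integral_distr) auto
  also have "\<dots> = (\<integral>\<^sup>+ f. indicator {f. sqrt (\<Sum>c\<in>insert b (Basis - {b}). (f c)\<^sup>2) \<le> 1} f * ennreal (sqrt (\<Sum>c\<in>Basis - {b}. (f c)\<^sup>2) powr p) \<partial>Pi\<^sub>M (insert b (Basis - {b})) (\<lambda>_. lborel))"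
    unfolding Bs[symmetric] by (intro nn_integral_cong) (simp only: indicator_def mem_Collect_eq ball br)
  also have "\<dots> = ennreal (unit_ball_vol (card (Basis - {b})) * (card (Basis - {b}) / (card (Basis - {b}) + p)) * Beta (1/2) ((card (Basis - {b}) + p) / 2 + 1))"
    by (rule main_pim) (use p in auto)
  also have "card (Basis - {b}) = DIM('a) - 1" using b by simp
  finally show ?thesis unfolding Kc_def .
qed

lemma ball_unit:
  fixes x :: "'a::euclidean_space" and p :: real
  assumes x: "norm x = 1" and p: "p \<ge> 1"
  shows "(\<integral>\<^sup>+ y. indicator (cball 0 1) y * ennreal (bracket x y powr p) \<partial>lborel) = ennreal (Kc DIM('a) p)"
proof -
  obtain b :: 'a where b: "b \<in> Basis" using nonempty_Basis by blast
  obtain T where T: "orthogonal_transformation T" "T b = x"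
    using house_exists[OF x, of b] b by auto
  have lin: "linear T" using T orthogonal_transformation_linear by blast
  have Tm[measurable]: "T \<in> borel_measurable borel"
    by (intro borel_measurable_continuous_onI linear_continuous_on linear_conv_bounded_linear[THEN iffD1] lin)
  have "(\<integral>\<^sup>+ y. indicator (cball 0 1) y * ennreal (bracket x y powr p) \<partial>lborel) =
      (\<integral>\<^sup>+ y. indicator (cball 0 1) y * ennreal (bracket x y powr p) \<partial>distr lborel borel T)"
    by (simp add: distr_orth[OF T(1)])
  also have "\<dots> = (\<integral>\<^sup>+ y. indicator (cball 0 1) (T y) * ennreal (bracket x (T y) powr p) \<partial>lborel)"
    by (subst nn_integral_distr) auto
  also have "\<dots> = (\<integral>\<^sup>+ y. indicator (cball 0 1) y * ennreal (bracket b y powr p) \<partial>lborel)"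
  proof (intro nn_integral_cong)
    fix y
    have n: "norm (T v) = norm v" for v using T(1) orthogonal_transformation_norm by blast
    have i: "T v \<bullet> T w = v \<bullet> w" for v w using T(1) by (simp add: orthogonal_transformation_def)
    have "bracket x (T y) = bracket b y" unfolding bracket_def T(2)[symmetric] n i ..
    moreover have "T y \<in> cball 0 1 \<longleftrightarrow> y \<in> cball 0 1" by (simp add: n)
    ultimately show "indicator (cball 0 1) (T y) * ennreal (bracket x (T y) powr p) = indicator (cball 0 1) y * ennreal (bracket b y powr p)"
      by (simp add: indicator_def)
  qed
  also have "\<dots> = ennreal (Kc DIM('a) p)" by (rule ball_basis[OF b p])
  finally show ?thesis .
qed

lemma bracket_scale: "bracket (c *\<^sub>R u) y = \<bar>c\<bar> * bracket u y"
proof -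
  have "(norm (c *\<^sub>R u))\<^sup>2 * (norm y)\<^sup>2 - ((c *\<^sub>R u) \<bullet> y)\<^sup>2 = c\<^sup>2 * ((norm u)\<^sup>2 * (norm y)\<^sup>2 - (u \<bullet> y)\<^sup>2)"
    by (simp add: power_mult_distrib algebra_simps)
  then show ?thesis unfolding bracket_def by (simp add: real_sqrt_mult)
qed

lemma bracket_nonneg: "bracket x y \<ge> 0"
proof -
  have "\<bar>x \<bullet> y\<bar> \<le> norm x * norm y" by (rule Cauchy_Schwarz_ineq2)
  then have "\<bar>x \<bullet> y\<bar>\<^sup>2 \<le> (norm x * norm y)\<^sup>2" by (intro power_mono) auto
  then have "(x \<bullet> y)\<^sup>2 \<le> (norm x)\<^sup>2 * (norm y)\<^sup>2" by (simp add: power_mult_distrib)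
  then show ?thesis unfolding bracket_def by simp
qed

lemma ball_general:
  fixes x :: "'a::euclidean_space" and p :: real
  assumes p: "p \<ge> 1"
  shows "(\<integral>\<^sup>+ y. indicator (cball 0 1) y * ennreal (bracket x y powr p) \<partial>lborel) = ennreal (norm x powr p * Kc DIM('a) p)"
proof (cases "x = 0")
  case True
  have "bracket x y = 0" for y using True by (simp add: bracket_def)
  then show ?thesis using True p by simp
next
  case False
  define u where "u = x /\<^sub>R norm x"
  have u: "norm u = 1" using False by (simp add: u_def)
  have xu: "x = norm x *\<^sub>R u" using False by (simp add: u_def)
  have "(\<integral>\<^sup>+ y. indicator (cball 0 1) y * ennreal (bracket x y powr p) \<partial>lborel) =
      (\<integral>\<^sup>+ y. ennreal (norm x powr p) * (indicator (cball 0 1) y * ennreal (bracket u y powr p)) \<partial>lborel)"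
  proof (intro nn_integral_cong)
    fix y
    have "bracket x y powr p = norm x powr p * bracket u y powr p"
      by (subst xu) (simp add: bracket_scale powr_mult bracket_nonneg)
    then show "indicator (cball 0 1) y * ennreal (bracket x y powr p) = ennreal (norm x powr p) * (indicator (cball 0 1) y * ennreal (bracket u y powr p))"
      by (simp add: ennreal_mult' mult_ac)
  qed
  also have "\<dots> = ennreal (norm x powr p) * ennreal (Kc DIM('a) p)"
    by (subst nn_integral_cmult) (auto simp: ball_unit[OF u p])
  also have "\<dots> = ennreal (norm x powr p * Kc DIM('a) p)"
    by (simp add: ennreal_mult')
  finally show ?thesis .
qed


lemma henstock_val:
  fixes x :: "'a::euclidean_space" and p :: real
  assumes p: "p \<ge> 1" and n: "DIM('a) \<ge> 2"
  shows "integral (cball 0 1) (\<lambda>y. bracket x y powr p) = norm x powr p * Kc DIM('a) p"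
proof -
  have K0: "Kc DIM('a) p \<ge> 0"
  proof -
    have "Kc DIM('a) p = c_tilde (real DIM('a)) p * unit_ball_vol (real DIM('a))"
      unfolding Kc_def using constant_eq[of "real DIM('a)" p] n p by (simp add: of_nat_diff)
    moreover have "c_tilde (real DIM('a)) p \<ge> 0"
      unfolding c_tilde_def omega_eq_ubv using n p
      by (intro divide_nonneg_pos mult_nonneg_nonneg mult_pos_pos unit_ball_vol_pos) auto
    ultimately show ?thesis by simp
  qed
  define f where "f = (\<lambda>y. indicator (cball 0 1) y * bracket x y powr p)"
  have fm: "f \<in> borel_measurable borel" unfolding f_def by measurable
  have "(\<integral>\<^sup>+ y. ennreal (f y) \<partial>lborel) = (\<integral>\<^sup>+ y. indicator (cball 0 1) y * ennreal (bracket x y powr p) \<partial>lborel)"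
    by (intro nn_integral_cong) (simp add: f_def indicator_def)
  also have "\<dots> = ennreal (norm x powr p * Kc DIM('a) p)" by (rule ball_general[OF p])
  finally have "(f has_integral (norm x powr p * Kc DIM('a) p)) UNIV"
    by (intro nn_integral_has_integral fm) (auto simp: f_def K0)
  moreover have "f = (\<lambda>y. if y \<in> cball 0 1 then bracket x y powr p else 0)"
    by (auto simp: f_def fun_eq_iff indicator_def)
  ultimately have "((\<lambda>y. bracket x y powr p) has_integral (norm x powr p * Kc DIM('a) p)) (cball 0 1)"
    using has_integral_restrict_UNIV[of "cball 0 1" "\<lambda>y. bracket x y powr p"] by metis
  then show ?thesis by (rule integral_unique)
qed

lemma supp_val:
  fixes x :: "'a::euclidean_space" and p :: real
  assumes p: "p \<ge> 1" and n: "DIM('a) \<ge> 2"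
  shows "Lambda_supp p (cball 0 1) x = norm x"
proof -
  have Kc: "Kc DIM('a) p = c_tilde (real DIM('a)) p * unit_ball_vol (real DIM('a))"
    unfolding Kc_def using constant_eq[of "real DIM('a)" p] n p by (simp add: of_nat_diff)
  have c0: "c_tilde (real DIM('a)) p > 0"
    unfolding c_tilde_def omega_eq_ubv using n p
    by (intro divide_pos_pos mult_pos_pos unit_ball_vol_pos) auto
  have u0: "unit_ball_vol (real DIM('a)) \<noteq> 0" using unit_ball_vol_pos[of "real DIM('a)"] by linarith
  have m: "measure lebesgue (cball (0::'a) 1) = unit_ball_vol (real DIM('a))"
    using content_cball[of 1 "0::'a"] by simp
  have "Lambda_supp p (cball 0 1) x = (norm x powr p) powr (1 / p)"
    unfolding Lambda_supp_def m henstock_val[OF p n] Kc using c0 u0 by (simp add: field_simps)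
  also have "\<dots> = norm x" using p by (simp add: powr_powr)
  finally show ?thesis .
qed

theorem proposition4p1:
  fixes p :: real
  assumes "p \<ge> 1" and "DIM('a::euclidean_space) \<ge> 2"
  shows "Lambda p (cball (0::'a) 1) = cball 0 1"
proof -
  have "Lambda p (cball (0::'a) 1) = {z. \<forall>x. z \<bullet> x \<le> norm x}"
    unfolding Lambda_def supp_val[OF assms] ..
  also have "\<dots> = cball 0 1"
  proof (intro set_eqI iffI)
    fix z :: 'a
    assume "z \<in> {z. \<forall>x. z \<bullet> x \<le> norm x}"
    then have "z \<bullet> z \<le> norm z" by auto
    then have "norm z * norm z \<le> norm z * 1" by (simp add: power2_norm_eq_inner[symmetric] power2_eq_square)
    then have "norm z \<le> 1" by (cases "z = 0") auto
    then show "z \<in> cball 0 1" by simp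
  next
    fix z :: 'a
    assume "z \<in> cball 0 1"
    then have z: "norm z \<le> 1" by simp
    show "z \<in> {z. \<forall>x. z \<bullet> x \<le> norm x}"
    proof (intro CollectI allI)
      fix x
      have "z \<bullet> x \<le> norm z * norm x" by (rule norm_cauchy_schwarz)
      also have "\<dots> \<le> norm x" using z by (simp add: mult_left_le_one_le)
      finally show "z \<bullet> x \<le> norm x" .
    qed
  qed
  finally show ?thesis .
qed

end
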